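(* Let $c$ be a $k$-valued function on $S$ with finite non-empty support (and not identically zero). Then there exist $X\in\mathfrak{gl}_\infty(k)$ and $Y\in\mathfrak{gl}_\infty(\mathcal U_1)$ such that $\sum_{w\in S}c(w)\,\mathrm{Tr}(w(X,Y))\neq0$.
   Context: $k$ has characteristic $0$. $\mathcal U=k[u_1,u_2,\dots]$ is the free graded-commutative algebra on countably many generators $u_i$ of homological degree $1$, and $\mathcal U_1$ its degree-$1$ part. $\mathfrak{gl}_\infty(B)=\varinjlim_n\mathbb M_n(B)$ denotes finite matrices. Consider the free graded algebra $k\langle x,y\rangle$ with $x$ of degree $0$ and $y$ of degree $1$; define $\tau(v_1\cdots v_n)=(-1)^{|v_n||v_1\cdots v_{n-1}|}v_nv_1\cdots v_{n-1}$ on words and $\mathrm N=1+\tau+\dots+\tau^{n-1}$ on words of length $n$. $S$ is a set consisting of one representative word for each cyclic word (class of words under cyclic permutation) $w$ of positive length with $\mathrm N(w)\neq0$; for $X,Y$ matrices, $w(X,Y)$ is obtained by substituting $X$ for $x$ and $Y$ for $y$. *)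

theory Defs
  imports Main
begin

datatype letter = LX | LY

fun ldeg :: "letter \<Rightarrow> nat" where
  "ldeg LX = 0" | "ldeg LY = 1"

definition wdeg :: "letter list \<Rightarrow> nat" where
  "wdeg w = sum_list (map ldeg w)"

text \<open>Elements of k<x,y> are finitely supported functions (letter list => k).
  The operator tau acts on a signed word (c, w).\<close>
definition tau :: "('a::field_char_0) \<times> letter list \<Rightarrow> 'a \<times> letter list" where
  "tau cw = (case cw of (c, w) \<Rightarrow>
     if w = [] then (c, w)
     else (c * (-1) ^ (ldeg (last w) * wdeg (butlast w)), last w # butlast w))"

definition normN :: "letter list \<Rightarrow> letter list \<Rightarrow> 'a::field_char_0" where
  "normN w = (\<lambda>v. \<Sum>j<length w. (case (tau ^^ j) ((1::'a), w) of (c, u) \<Rightarrow> if u = v then c else 0))"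

definition rep_set :: "'a::field_char_0 itself \<Rightarrow> letter list set \<Rightarrow> bool" where
  "rep_set TYPE('a) S \<longleftrightarrow>
     S \<subseteq> {w. w \<noteq> [] \<and> (normN w :: letter list \<Rightarrow> 'a) \<noteq> (\<lambda>_. 0)} \<and>
     (\<forall>w. w \<noteq> [] \<and> (normN w :: letter list \<Rightarrow> 'a) \<noteq> (\<lambda>_. 0) \<longrightarrow>
        (\<exists>!s. s \<in> S \<and> (\<exists>j. s = rotate j w)))"

text \<open>The free graded-commutative algebra U = k[u_1,u_2,...] on odd generators (an exterior
  algebra), modelled as functions from finite index sets A (the monomial u_A with
  increasing indices) to coefficients.\<close>
type_synonym 'a U = "nat set \<Rightarrow> 'a"

definition ext_sign :: "nat set \<Rightarrow> nat set \<Rightarrow> 'a::field_char_0" where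
  "ext_sign A B = (-1) ^ card {(i, j). i \<in> A \<and> j \<in> B \<and> j < i}"

definition ext_mult :: "('a::field_char_0) U \<Rightarrow> 'a U \<Rightarrow> 'a U" where
  "ext_mult a b = (\<lambda>T. if finite T then (\<Sum>A\<in>Pow T. ext_sign A (T - A) * a A * b (T - A)) else 0)"

definition ext_scalar :: "'a::field_char_0 \<Rightarrow> 'a U" where
  "ext_scalar c = (\<lambda>T. if T = {} then c else 0)"

text \<open>Embedding of U_1: a finitely supported coefficient vector f gives sum_i f i * u_i.\<close>
definition ext_deg1 :: "(nat \<Rightarrow> 'a::field_char_0) \<Rightarrow> 'a U" where
  "ext_deg1 f = (\<lambda>T. if card T = 1 then f (the_elem T) else 0)"

definition mat_mult_U :: "nat \<Rightarrow> (nat \<Rightarrow> nat \<Rightarrow> ('a::field_char_0) U) \<Rightarrow> (nat \<Rightarrow> nat \<Rightarrow> 'a U) \<Rightarrow> nat \<Rightarrow> nat \<Rightarrow> 'a U" where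
  "mat_mult_U n M N = (\<lambda>i j T. \<Sum>l<n. ext_mult (M i l) (N l j) T)"

definition mat_one_U :: "nat \<Rightarrow> nat \<Rightarrow> ('a::field_char_0) U" where
  "mat_one_U = (\<lambda>i j. ext_scalar (if i = j then 1 else 0))"

fun word_mat :: "nat \<Rightarrow> (nat \<Rightarrow> nat \<Rightarrow> 'a::field_char_0) \<Rightarrow> (nat \<Rightarrow> nat \<Rightarrow> nat \<Rightarrow> 'a)
                 \<Rightarrow> letter list \<Rightarrow> nat \<Rightarrow> nat \<Rightarrow> 'a U" where
  "word_mat n X Y [] = mat_one_U"
| "word_mat n X Y (LX # w) = mat_mult_U n (\<lambda>i j. ext_scalar (X i j)) (word_mat n X Y w)"
| "word_mat n X Y (LY # w) = mat_mult_U n (\<lambda>i j. ext_deg1 (Y i j)) (word_mat n X Y w)"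

definition trace_U :: "nat \<Rightarrow> (nat \<Rightarrow> nat \<Rightarrow> ('a::field_char_0) U) \<Rightarrow> 'a U" where
  "trace_U n M = (\<lambda>T. \<Sum>i<n. M i i T)"

end

theory Submission
  imports Defs
begin


lemma ext_mult_zero_left[simp]: "ext_mult (\<lambda>_. 0) b = (\<lambda>_. (0::'a::field_char_0))"
  by (simp add: ext_mult_def fun_eq_iff)

lemma ext_mult_zero_right[simp]: "ext_mult a (\<lambda>_. 0) = (\<lambda>_. (0::'a::field_char_0))"
  by (simp add: ext_mult_def fun_eq_iff)

lemma ext_scalar_0[simp]: "ext_scalar 0 = (\<lambda>_. (0::'a::field_char_0))"
  by (simp add: ext_scalar_def fun_eq_iff)

lemma ext_deg1_0[simp]: "ext_deg1 (\<lambda>_. 0) = (\<lambda>_. (0::'a::field_char_0))"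
  by (simp add: ext_deg1_def fun_eq_iff)

lemma ext_deg1_single: "ext_deg1 (\<lambda>q. if q = i then 1 else 0) = (\<lambda>T. if T = {i} then (1::'a::field_char_0) else 0)"
proof -
  have "(card T = 1 \<and> the_elem T = i) \<longleftrightarrow> T = {i}" for T :: "nat set"
    by (auto simp: card_1_singleton_iff)
  then show ?thesis unfolding ext_deg1_def fun_eq_iff by (metis (no_types, lifting))
qed

lemma ext_mult_one: "ext_mult (ext_scalar 1) b T = (if finite T then b T else (0::'a::field_char_0))"
proof (cases "finite T")
  case True
  have "(\<Sum>A\<in>Pow T. ext_sign A (T - A) * ext_scalar 1 A * b (T - A)) =
        (\<Sum>A\<in>Pow T. if A = {} then b T else 0)"
    by (rule sum.cong) (auto simp: ext_scalar_def ext_sign_def)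
  also have "\<dots> = b T" using True by (simp add: sum.delta')
  finally show ?thesis using True by (simp add: ext_mult_def)
qed (simp add: ext_mult_def)

lemma ext_mult_single: "ext_mult (\<lambda>S. if S = {p} then 1 else 0) b T =
  (if finite T \<and> p \<in> T then (-1) ^ card {q\<in>T. q < p} * b (T - {p}) else (0::'a::field_char_0))"
proof (cases "finite T")
  case True
  have cs: "ext_sign {p} (T - {p}) = ((-1) ^ card {q\<in>T. q < p} :: 'a)"
  proof -
    have "{(i, j). i \<in> {p} \<and> j \<in> T - {p} \<and> j < i} = (\<lambda>q. (p, q)) ` {q\<in>T. q < p}" by auto
    moreover have "card ((\<lambda>q. (p, q)) ` {q\<in>T. q < p}) = card {q\<in>T. q < p}"
      by (rule card_image) (auto simp: inj_on_def)
    ultimately show ?thesis by (simp add: ext_sign_def)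
  qed
  have "(\<Sum>A\<in>Pow T. ext_sign A (T - A) * (if A = {p} then 1 else 0) * b (T - A)) =
        (\<Sum>A\<in>Pow T. if A = {p} then ext_sign {p} (T - {p}) * b (T - {p}) else 0)"
    by (rule sum.cong) auto
  also have "\<dots> = (if p \<in> T then ext_sign {p} (T - {p}) * b (T - {p}) else 0)"
    using True by (simp add: sum.delta')
  finally show ?thesis using True cs by (simp add: ext_mult_def)
qed (simp add: ext_mult_def)




definition gen :: "letter list \<Rightarrow> letter \<Rightarrow> nat \<Rightarrow> ('a::field_char_0) U" where
  "gen v a i = (if v ! i = a then (if a = LX then ext_scalar 1 else (\<lambda>T. if T = {i} then 1 else 0)) else (\<lambda>_. 0))"

fun G :: "letter list \<Rightarrow> nat \<Rightarrow> letter list \<Rightarrow> ('a::field_char_0) U" where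
  "G v i [] = ext_scalar 1"
| "G v i (a # u) = ext_mult (gen v a i) (G v (Suc i mod length v) u)"

fun valid :: "letter list \<Rightarrow> nat \<Rightarrow> letter list \<Rightarrow> bool" where
  "valid v i [] = True"
| "valid v i (a # u) = (v ! i = a \<and> valid v (Suc i mod length v) u)"

fun yp :: "letter list \<Rightarrow> nat \<Rightarrow> letter list \<Rightarrow> nat list" where
  "yp v i [] = []"
| "yp v i (a # u) = (if a = LY then [i] else []) @ yp v (Suc i mod length v) u"

fun invc :: "nat list \<Rightarrow> nat" where
  "invc [] = 0"
| "invc (p # l) = length (filter (\<lambda>q. q < p) l) + invc l"

lemma G_char:
  "G v i u T = (if valid v i u \<and> distinct (yp v i u) \<and> set (yp v i u) = T
                 then (-1) ^ invc (yp v i u) else (0::'a::field_char_0))"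
proof (induction u arbitrary: i T)
  case Nil
  then show ?case by (auto simp: ext_scalar_def)
next
  case (Cons a u)
  define i' where "i' = Suc i mod length v"
  show ?case
  proof (cases "v ! i = a")
    case False
    then show ?thesis by (simp add: gen_def)
  next
    case True
    show ?thesis
    proof (cases a)
      case LX
      have e: "G v i (a # u) T = (if finite T then G v i' u T else 0)"
        using True LX by (simp add: gen_def ext_mult_one i'_def)
      have yl: "yp v i (a # u) = yp v i' u" using LX by (simp add: i'_def)
      have vl: "valid v i (a # u) = valid v i' u" using True by (simp add: i'_def)
      show ?thesis unfolding e yl vl Cons.IH[of i' T] by auto
    next
      case LY
      let ?L = "yp v i' u"
      have e: "G v i (a # u) T = (if finite T \<and> i \<in> T then (-1) ^ card {q\<in>T. q < i} * G v i' u (T - {i}) else 0)"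
        using True LY by (simp add: gen_def ext_mult_single i'_def)
      have yl: "yp v i (a # u) = i # ?L" using LY by (simp add: i'_def)
      have vl: "valid v i (a # u) = valid v i' u" using True by (simp add: i'_def)
      show ?thesis
      proof (cases "valid v i' u \<and> distinct (i # ?L) \<and> set (i # ?L) = T")
        case c: True
        then have "finite T" "i \<in> T" "distinct ?L" "set ?L = T - {i}" by auto
        moreover have "{q\<in>T. q < i} = set (filter (\<lambda>q. q < i) ?L)" using c by auto
        hence "card {q\<in>T. q < i} = length (filter (\<lambda>q. q < i) ?L)"
          using c distinct_card[of "filter (\<lambda>q. q < i) ?L"] by simp
        ultimately show ?thesis unfolding e yl vl Cons.IH[of i' "T - {i}"] using c by (simp add: power_add)
      next
        case c: False
        have "\<not> (finite T \<and> i \<in> T \<and> valid v i' u \<and> distinct ?L \<and> set ?L = T - {i})"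
          using c by auto
        then show ?thesis unfolding e yl vl Cons.IH[of i' "T - {i}"] using c by auto
      qed
    qed
  qed
qed




definition Xm :: "letter list \<Rightarrow> nat \<Rightarrow> nat \<Rightarrow> 'a::field_char_0" where
  "Xm v i j = (if i < length v \<and> j = Suc i mod length v \<and> v ! i = LX then 1 else 0)"

definition Ym :: "letter list \<Rightarrow> nat \<Rightarrow> nat \<Rightarrow> nat \<Rightarrow> 'a::field_char_0" where
  "Ym v i j = (if i < length v \<and> j = Suc i mod length v \<and> v ! i = LY then (\<lambda>q. if q = i then 1 else 0) else (\<lambda>_. 0))"

lemma Ym_fin: "finite {m. Ym v i j m \<noteq> 0}"
proof -
  have "{m. Ym v i j m \<noteq> 0} \<subseteq> {i}" by (auto simp: Ym_def split: if_splits)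
  then show ?thesis using finite_subset by blast
qed

lemma word_mat_char:
  assumes "i < length v" "j < length v"
  shows "word_mat (length v) (Xm v) (Ym v) u i j =
    (if j = (i + length u) mod length v then G v i u else (\<lambda>_. (0::'a::field_char_0)))"
  using assms(1)
proof (induction u arbitrary: i)
  case Nil
  then show ?case by (auto simp: mat_one_U_def)
next
  case (Cons a u)
  let ?m = "length v"
  let ?W = "word_mat ?m (Xm v) (Ym v) u :: nat \<Rightarrow> nat \<Rightarrow> 'a U"
  define i' where "i' = Suc i mod ?m"
  have "0 < ?m" using Cons.prems by linarith
  then have i'm: "i' < ?m" unfolding i'_def by simp
  have E: "(case a of LX \<Rightarrow> ext_scalar (Xm v i l) | LY \<Rightarrow> ext_deg1 (Ym v i l)) =
         (if l = i' then gen v a i else (\<lambda>_. (0::'a)))" for l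
    using Cons.prems by (cases a) (auto simp: Xm_def Ym_def gen_def i'_def ext_deg1_single)
  have wm: "word_mat ?m (Xm v) (Ym v) (a # u) i j =
        (\<lambda>T. \<Sum>l<?m. ext_mult (case a of LX \<Rightarrow> ext_scalar (Xm v i l) | LY \<Rightarrow> ext_deg1 (Ym v i l)) (?W l j) T)"
    by (cases a) (simp_all add: mat_mult_U_def)
  also have "\<dots> = (\<lambda>T. \<Sum>l<?m. if l = i' then ext_mult (gen v a i) (?W i' j) T else 0)"
  proof -
    have "ext_mult (case a of LX \<Rightarrow> ext_scalar (Xm v i l) | LY \<Rightarrow> ext_deg1 (Ym v i l)) (?W l j) T
       = (if l = i' then ext_mult (gen v a i) (?W i' j) T else 0)" (is "?P l T") for l T
      using Cons.prems by (cases a) (auto simp: Xm_def Ym_def gen_def i'_def ext_deg1_single)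
    then show ?thesis by (intro ext sum.cong refl)
  qed
  also have "\<dots> = (\<lambda>T. ext_mult (gen v a i) (?W i' j) T)"
    using i'm by simp
  also have "\<dots> = (if j = (i + length (a # u)) mod ?m then G v i (a # u) else (\<lambda>_. 0))"
  proof -
    have jj: "(j = (i' + length u) mod ?m) = (j = (i + length (a # u)) mod ?m)"
      unfolding i'_def by (simp add: mod_add_left_eq)
    then show ?thesis
    proof (cases "j = (i' + length u) mod ?m")
      case True
      then show ?thesis using jj Cons.IH[OF i'm] by (simp add: i'_def)
    next
      case False
      then have "?W i' j = (\<lambda>_. 0)" using Cons.IH[OF i'm] by simp
      then show ?thesis using False jj by (simp add: i'_def)
    qed
  qed
  finally show ?case .
qed

lemma mod_self_add: "i < (m::nat) \<Longrightarrow> (i = (i + L) mod m) = (m dvd L)"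
  by (metis Euclidean_Rings.div_eq_0_iff add.commute add_right_cancel
    div_mod_decomp dvd_def mod_0_imp_dvd mod_eq_self_iff_div_eq_0
    mod_mult_self2 mod_mult_self2_is_0)

lemma trace_char:
  "trace_U (length v) (word_mat (length v) (Xm v) (Ym v) u) T =
    (if length v dvd length u then (\<Sum>i<length v. G v i u T) else (0::'a::field_char_0))"
  unfolding trace_U_def by (auto simp: word_mat_char mod_self_add)




lemma all_less_Suc_split: "(\<forall>t<Suc n. P t) = (P 0 \<and> (\<forall>t<n. P (Suc t)))"
  by (metis less_Suc_eq_0_disj not_less_eq zero_less_Suc)

lemma valid_nth:
  "i < length v \<Longrightarrow> valid v i u = (\<forall>t<length u. u ! t = v ! ((i + t) mod length v))"
proof (induction u arbitrary: i)
  case Nil then show ?case by simp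
next
  case (Cons a u)
  have p: "0 < length v" using Cons.prems by linarith
  have "Suc i mod length v < length v" using p by simp
  note IH = Cons.IH[OF this]
  have e: "(Suc i mod length v + t) mod length v = (i + Suc t) mod length v" for t
    by (simp add: mod_add_left_eq)
  show ?case unfolding valid.simps IH e using Cons.prems
    by (auto simp: all_less_Suc_split)
qed

lemma upt_Suc_map: "[0..<Suc n] = 0 # map Suc [0..<n]"
  by (simp add: map_Suc_upt upt_conv_Cons)

lemma yp_nth:
  "i < length v \<Longrightarrow> yp v i u = map (\<lambda>t. (i + t) mod length v) (filter (\<lambda>t. u ! t = LY) [0..<length u])"
proof (induction u arbitrary: i)
  case Nil then show ?case by simp
next
  case (Cons a u)
  have p: "0 < length v" using Cons.prems by linarith
  have "Suc i mod length v < length v" using p by simp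
  note IH = Cons.IH[OF this]
  have e: "(\<lambda>t. (Suc i mod length v + t) mod length v) = (\<lambda>t. (i + t) mod length v) \<circ> Suc"
    by (auto simp: mod_add_left_eq)
  have f: "filter (\<lambda>t. (a # u) ! t = LY) (map Suc [0..<length u]) = map Suc (filter (\<lambda>t. u ! t = LY) [0..<length u])"
    by (simp add: filter_map comp_def)
  show ?case unfolding yp.simps IH e length_Cons upt_Suc_map filter.simps f
    using Cons.prems by (simp del: upt_Suc)
qed

lemma len_bound:
  assumes im: "i < length v" and va: "valid v i u" and di: "distinct (yp v i u)" and y: "LY \<in> set v"
  shows "length u < 2 * length v"
proof (rule ccontr)
  assume "\<not> ?thesis"
  hence lu: "2 * length v \<le> length u" by simp
  let ?m = "length v"
  obtain p where p: "p < ?m" "v ! p = LY" using y by (auto simp: in_set_conv_nth)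
  define t1 where "t1 = (p + ?m - i) mod ?m"
  have "0 < ?m" using im by linarith
  then have t1m: "t1 < ?m" unfolding t1_def by simp
  have pos: "(i + t1) mod ?m = p" "(i + (t1 + ?m)) mod ?m = p"
  proof -
    have "(i + t1) mod ?m = (i + (p + ?m - i)) mod ?m" unfolding t1_def by (simp add: mod_add_right_eq)
    also have "i + (p + ?m - i) = p + ?m" using im by simp
    finally show "(i + t1) mod ?m = p" using p by simp
    then show "(i + (t1 + ?m)) mod ?m = p" by (metis add.assoc mod_add_self2)
  qed
  have vn: "\<forall>t<length u. u ! t = v ! ((i + t) mod ?m)" using va valid_nth[OF im] by blast
  have in1: "t1 \<in> set (filter (\<lambda>t. u ! t = LY) [0..<length u])"
    using vn t1m lu pos p by auto
  have in2: "t1 + ?m \<in> set (filter (\<lambda>t. u ! t = LY) [0..<length u])"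
    using vn t1m lu pos p by auto
  have "inj_on (\<lambda>t. (i + t) mod ?m) (set (filter (\<lambda>t. u ! t = LY) [0..<length u]))"
    using di yp_nth[OF im] distinct_map by metis
  then have "t1 = t1 + ?m" using in1 in2 pos unfolding inj_on_def by metis
  then show False using im by simp
qed

lemma valid_rotate:
  assumes im: "i < length v" and lu: "length u = length v"
  shows "valid v i u = (u = rotate i v)"
proof -
  have "(u = rotate i v) = (\<forall>t<length u. u ! t = rotate i v ! t)"
    using lu by (auto intro: nth_equalityI)
  also have "\<dots> = (\<forall>t<length u. u ! t = v ! ((i + t) mod length v))"
    using lu by (simp add: nth_rotate)
  finally show ?thesis using valid_nth[OF im] by simp
qed




definition ycnt :: "letter list \<Rightarrow> nat" where
  "ycnt l = length (filter (\<lambda>a. a = LY) l)"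

lemma ycnt_simps[simp]: "ycnt [] = 0" "ycnt (a # l) = (if a = LY then 1 else 0) + ycnt l"
  "ycnt (l1 @ l2) = ycnt l1 + ycnt l2"
  by (auto simp: ycnt_def)

lemma wdeg_ycnt: "wdeg l = ycnt l"
proof (induction l)
  case (Cons a l) then show ?case by (cases a) (auto simp: wdeg_def)
qed (simp add: wdeg_def)

lemma drop_take_rotate: "k \<le> length w \<Longrightarrow> drop k w @ take k w = rotate k w"
  by (cases "k = length w") (auto simp: rotate_drop_take)

lemma tau_iter:
  assumes "j \<le> length w"
  shows "(tau ^^ j) ((1::'a::field_char_0), w) =
    ((-1) ^ ((ycnt w - 1) * ycnt (drop (length w - j) w)), drop (length w - j) w @ take (length w - j) w)"
  using assms
proof (induction j)
  case 0 then show ?case by simp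
next
  case (Suc j)
  let ?m = "length w"
  define d where "d = ?m - Suc j"
  have dm: "d < ?m" and mj: "?m - j = Suc d" using Suc.prems unfolding d_def by auto
  have IH: "(tau ^^ j) ((1::'a), w) = ((-1) ^ ((ycnt w - 1) * ycnt (drop (Suc d) w)), drop (Suc d) w @ take (Suc d) w)"
    using Suc.IH Suc.prems mj by simp
  have tk: "take (Suc d) w = take d w @ [w ! d]" using dm by (simp add: take_Suc_conv_app_nth)
  have dr: "drop d w = w ! d # drop (Suc d) w" using dm by (simp add: Cons_nth_drop_Suc)
  have wsplit: "ycnt w = ycnt (take d w) + ycnt [w ! d] + ycnt (drop (Suc d) w)"
  proof -
    have "w = take d w @ [w ! d] @ drop (Suc d) w" using dm by (simp add: id_take_nth_drop)
    then show ?thesis by (metis ycnt_simps(3) add.assoc)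
  qed
  let ?W = "drop (Suc d) w @ take d w @ [w ! d]"
  have tw: "tau (c, ?W) = (c * (-1) ^ (ldeg (w ! d) * ycnt (drop (Suc d) w @ take d w)), w ! d # drop (Suc d) w @ take d w)" for c :: 'a
    by (simp add: tau_def wdeg_ycnt butlast_append)
  have "(tau ^^ Suc j) ((1::'a), w) = tau ((-1) ^ ((ycnt w - 1) * ycnt (drop (Suc d) w)), ?W)"
    using IH tk by simp
  also have "\<dots> = ((-1) ^ ((ycnt w - 1) * ycnt (drop d w)), drop d w @ take d w)"
  proof (cases "w ! d")
    case LX
    then show ?thesis unfolding tw dr by simp
  next
    case LY
    have e: "ycnt w - 1 = ycnt (drop (Suc d) w @ take d w)" using wsplit LY by simp
    show ?thesis unfolding tw dr using LY e by (simp add: power_add algebra_simps)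
  qed
  finally show ?case unfolding d_def by simp
qed

lemma normN_formula:
  "normN w v = (\<Sum>j<length w. if rotate (length w - j) w = v
      then (-1) ^ ((ycnt w - 1) * ycnt (drop (length w - j) w)) else (0::'a::field_char_0))"
  unfolding normN_def
  by (intro sum.cong refl) (simp add: tau_iter drop_take_rotate)




lemma invc_append: "invc (xs @ ys) = invc xs + invc ys + sum_list (map (\<lambda>x. length (filter (\<lambda>q. q < x) ys)) xs)"
  by (induction xs) auto

lemma invc_sorted: "sorted_wrt (<) l \<Longrightarrow> invc l = 0"
proof (induction l)
  case (Cons p l)
  have "filter (\<lambda>q. q < p) l = []" using Cons.prems by (auto simp: filter_empty_conv)
  then show ?case using Cons by simp
qed simp

lemma map_mod_upt: "i < m \<Longrightarrow> map (\<lambda>t. (i + t) mod m) [0..<m] = [i..<m] @ [0..<i]"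
proof (rule nth_equalityI)
  assume im: "i < m"
  show "length (map (\<lambda>t. (i + t) mod m) [0..<m]) = length ([i..<m] @ [0..<i])" using im by simp
  fix t assume "t < length (map (\<lambda>t. (i + t) mod m) [0..<m])"
  hence tm: "t < m" by simp
  show "map (\<lambda>t. (i + t) mod m) [0..<m] ! t = ([i..<m] @ [0..<i]) ! t"
  proof (cases "t < m - i")
    case True
    then show ?thesis using tm im by (simp add: nth_append)
  next
    case False
    then have "(i + t) mod m = i + t - m" using tm im
      by (simp add: le_mod_geq)
    then show ?thesis using tm im False by (simp add: nth_append)
  qed
qed

lemma yp_rot:
  assumes im: "i < length v" and w: "w = rotate i v"
  shows "yp v i w = filter (\<lambda>p. v ! p = LY) ([i..<length v] @ [0..<i])"
proof -
  let ?m = "length v"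
  let ?f = "\<lambda>t. (i + t) mod ?m"
  have lw: "length w = ?m" using w by simp
  have "filter (\<lambda>t. w ! t = LY) [0..<?m] = filter ((\<lambda>p. v ! p = LY) \<circ> ?f) [0..<?m]"
    using w by (intro filter_cong refl) (simp add: nth_rotate)
  then have "yp v i w = map ?f (filter ((\<lambda>p. v ! p = LY) \<circ> ?f) [0..<?m])"
    using yp_nth[OF im] lw by simp
  also have "\<dots> = filter (\<lambda>p. v ! p = LY) (map ?f [0..<?m])" by (simp add: filter_map)
  finally show ?thesis using map_mod_upt[OF im] by simp
qed

lemma ycnt_filter_upt: "i \<le> length v \<Longrightarrow> ycnt (take i v) = length (filter (\<lambda>p. v ! p = LY) [0..<i])"
proof -
  assume "i \<le> length v"
  then have "take i v = map ((!) v) [0..<i]" by (intro nth_equalityI) auto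
  then show ?thesis by (simp add: ycnt_def filter_map comp_def)
qed

lemma ycnt_rotate: "ycnt (rotate i v) = ycnt v"
  by (metis append_take_drop_id rotate_drop_take ycnt_simps(3) add.commute)

lemma sign_eq:
  assumes im: "i < length v" and w: "w = rotate i v"
  shows "((-1::'a::field_char_0) ^ invc (yp v i w)) = (-1) ^ ((ycnt w - 1) * ycnt (drop (length v - i) w))"
proof -
  let ?m = "length v"
  let ?P = "\<lambda>p. v ! p = LY"
  define A where "A = filter ?P [0..<i]"
  define B where "B = filter ?P [i..<?m]"
  have inv: "invc (yp v i w) = length B * length A"
  proof -
    have "invc (B @ A) = invc B + invc A + sum_list (map (\<lambda>x. length (filter (\<lambda>q. q < x) A)) B)"
      by (rule invc_append)
    also have "invc B = 0" unfolding B_def by (intro invc_sorted sorted_wrt_filter) simp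
    also have "invc A = 0" unfolding A_def by (intro invc_sorted sorted_wrt_filter) simp
    also have "map (\<lambda>x. length (filter (\<lambda>q. q < x) A)) B = map (\<lambda>x. length A) B"
    proof (intro map_cong refl)
      fix x assume "x \<in> set B"
      then have "i \<le> x" unfolding B_def by simp
      then have "filter (\<lambda>q. q < x) A = A" unfolding A_def by (intro filter_True) auto
      then show "length (filter (\<lambda>q. q < x) A) = length A" by simp
    qed
    also have "sum_list (map (\<lambda>x. length A) B) = length B * length A"
      by (simp add: sum_list_triv)
    finally show ?thesis using yp_rot[OF im w] unfolding A_def B_def by simp
  qed
  have s: "ycnt (drop (?m - i) w) = length A"
  proof -
    have "w = drop i v @ take i v" using w im by (simp add: rotate_drop_take)
    then have "drop (?m - i) w = take i v" using im by simp
    then show ?thesis unfolding A_def using ycnt_filter_upt[of i v] im by simp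
  qed
  have k: "ycnt w = length A + length B"
  proof -
    have "ycnt w = ycnt v" using w ycnt_rotate by simp
    also have "\<dots> = length (filter ?P [0..<?m])" using ycnt_filter_upt[of ?m v] by simp
    also have "[0..<?m] = [0..<i] @ [i..<?m]" using upt_add_eq_append[of 0 i "?m - i"] im by simp
    finally show ?thesis unfolding A_def B_def by simp
  qed
  show ?thesis
  proof (cases "length A = 0")
    case True then show ?thesis using inv s by simp
  next
    case False
    have "(ycnt w - 1) * length A = length B * length A + (length A - 1) * length A"
    proof -
      have "ycnt w - 1 = length B + (length A - 1)" using k False by linarith
      then show ?thesis by (simp add: add_mult_distrib)
    qed
    moreover have "even ((length A - 1) * length A)" by simp
    ultimately show ?thesis using inv s by (simp add: power_add)
  qed
qed




lemma sumG_eq_normN: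
  assumes lw: "length w = length v"
  shows "(\<Sum>i<length v. G v i w {p. p < length v \<and> v ! p = LY}) = (normN w v :: 'a::field_char_0)"
proof -
  let ?m = "length v"
  let ?T0 = "{p. p < ?m \<and> v ! p = LY}"
  have "G v i w ?T0 = (if rotate (?m - i) w = v
      then (-1) ^ ((ycnt w - 1) * ycnt (drop (?m - i) w)) else (0::'a))" if im: "i < ?m" for i
  proof -
    have eqv: "(rotate (?m - i) w = v) = (w = rotate i v)"
    proof
      assume "rotate (?m - i) w = v"
      then have "rotate i v = rotate (i + (?m - i)) w" by (metis rotate_rotate)
      also have "i + (?m - i) = length w" using im lw by simp
      finally show "w = rotate i v" by simp
    next
      assume "w = rotate i v"
      then have "rotate (?m - i) w = rotate (?m - i + i) v" by (simp add: rotate_rotate)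
      also have "?m - i + i = ?m" using im by simp
      finally show "rotate (?m - i) w = v" by simp
    qed
    show ?thesis
    proof (cases "w = rotate i v")
      case True
      have yl: "yp v i w = filter (\<lambda>p. v ! p = LY) ([i..<?m] @ [0..<i])" by (rule yp_rot[OF im True])
      have "distinct (yp v i w)" unfolding yl by (rule distinct_filter) (auto)
      moreover have "set (yp v i w) = ?T0" unfolding yl using im by auto
      moreover have "valid v i w" using valid_rotate[OF im lw] True by simp
      ultimately have "G v i w ?T0 = ((-1) ^ invc (yp v i w) :: 'a)" by (simp add: G_char)
      then show ?thesis using sign_eq[OF im True, where 'a='a] eqv True by simp
    next
      case False
      then have "\<not> valid v i w" using valid_rotate[OF im lw] by simp
      then show ?thesis using eqv False by (simp add: G_char)
    qed
  qed
  then show ?thesis unfolding normN_formula[of w v] lw by (intro sum.cong refl) simp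
qed

theorem mainTheorem20:
  fixes S :: "letter list set" and c :: "letter list \<Rightarrow> 'a::field_char_0"
  assumes "rep_set TYPE('a) S"
    and "finite {w \<in> S. c w \<noteq> 0}"
    and "{w \<in> S. c w \<noteq> 0} \<noteq> {}"
  shows "\<exists>(n::nat) (X :: nat \<Rightarrow> nat \<Rightarrow> 'a) (Y :: nat \<Rightarrow> nat \<Rightarrow> nat \<Rightarrow> 'a).
           (\<forall>i j. finite {m. Y i j m \<noteq> 0}) \<and>
           (\<lambda>T. \<Sum>w \<in> {w \<in> S. c w \<noteq> 0}. c w * trace_U n (word_mat n X Y w) T) \<noteq> (\<lambda>_. 0)"
proof -
  define F where "F = {w \<in> S. c w \<noteq> 0}"
  have fin: "finite F" and ne: "F \<noteq> {}" using assms(2,3) unfolding F_def by auto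
  have Ssub: "\<And>w. w \<in> S \<Longrightarrow> w \<noteq> [] \<and> (normN w :: letter list \<Rightarrow> 'a) \<noteq> (\<lambda>_. 0)"
    using assms(1) unfolding rep_set_def by blast
  have uniq: "\<And>w. w \<noteq> [] \<Longrightarrow> (normN w :: letter list \<Rightarrow> 'a) \<noteq> (\<lambda>_. 0) \<Longrightarrow>
      \<exists>!s. s \<in> S \<and> (\<exists>j. s = rotate j w)"
    using assms(1) unfolding rep_set_def by blast
  have "\<exists>w\<in>F. LY \<in> set w \<or> (\<forall>u\<in>F. LY \<notin> set u \<and> length u \<le> length w)"
  proof (cases "\<exists>w\<in>F. LY \<in> set w")
    case True then show ?thesis by blast
  next
    case False
    define M where "M = Max (length ` F)"
    have "M \<in> length ` F" unfolding M_def using fin ne by (intro Max_in) auto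
    then obtain w where "w \<in> F" "length w = M" by auto
    moreover have "\<forall>u\<in>F. length u \<le> M" unfolding M_def using fin by auto
    ultimately show ?thesis using False by metis
  qed
  then obtain w where wF: "w \<in> F" and wcase: "LY \<in> set w \<or> (\<forall>u\<in>F. LY \<notin> set u \<and> length u \<le> length w)"
    by blast
  have wS: "w \<in> S" and cw: "c w \<noteq> 0" using wF unfolding F_def by auto
  have wne: "w \<noteq> []" and Nw: "(normN w :: letter list \<Rightarrow> 'a) \<noteq> (\<lambda>_. 0)" using Ssub[OF wS] by auto
  obtain v where Nwv: "(normN w v :: 'a) \<noteq> 0" using Nw by auto
  then obtain j0 where vrot: "v = rotate j0 w"
  proof -
    assume h: "\<And>j0. v = rotate j0 w \<Longrightarrow> thesis"
    show thesis
    proof (rule ccontr)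
      assume "\<not> thesis"
      then have "\<And>j. rotate j w \<noteq> v" using h by metis
      then have "(normN w v :: 'a) = 0" unfolding normN_formula by simp
      then show False using Nwv by simp
    qed
  qed
  define m where "m = length v"
  have lw: "length w = m" unfolding m_def vrot by simp
  have mpos: "0 < m" using wne lw by auto
  have setv: "set v = set w" unfolding vrot by simp
  define T0 where "T0 = {p. p < length v \<and> v ! p = LY}"
  let ?tr = "\<lambda>u. trace_U m (word_mat m (Xm v) (Ym v) u) T0 :: 'a"
  have others: "?tr u = 0" if uF: "u \<in> F" and uw: "u \<noteq> w" for u
  proof (rule ccontr)
    assume nz: "?tr u \<noteq> 0"
    have uS: "u \<in> S" using uF unfolding F_def by auto
    have une: "u \<noteq> []" using Ssub[OF uS] by simp
    have dv: "m dvd length u" and sz: "(\<Sum>i<m. G v i u T0) \<noteq> (0::'a)"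
      using nz trace_char[of v u T0] unfolding m_def by (auto split: if_splits)
    then obtain i where im: "i < m" and Gi: "G v i u T0 \<noteq> (0::'a)"
      by (meson sum.neutral lessThan_iff)
    have va: "valid v i u" and di: "distinct (yp v i u)"
      using Gi by (auto simp: G_char split: if_splits)
    have lt: "length u < 2 * m"
    proof (cases "LY \<in> set w")
      case True
      then show ?thesis using len_bound[of i v u] im va di setv unfolding m_def by simp
    next
      case False
      then have "length u \<le> m" using wcase uF lw by auto
      then show ?thesis using mpos by simp
    qed
    obtain q where q: "length u = m * q" using dv by blast
    have "q = 1"
    proof -
      have "q \<noteq> 0" using q une by (metis length_0_conv mult_0_right)
      moreover have "q < 2" using q lt mpos by auto
      ultimately show ?thesis by simp
    qed
    then have "length u = length v" using q unfolding m_def by simp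
    then have "u = rotate i v" using valid_rotate[of i v u] va im unfolding m_def by simp
    then have ur: "u = rotate (i + j0) w" unfolding vrot by (simp add: rotate_rotate)
    have "w = rotate 0 w" by simp
    then have "u = w" using uniq[OF wne Nw] uS wS ur by blast
    then show False using uw by simp
  qed
  have "(\<Sum>u\<in>F. c u * ?tr u) = (\<Sum>u\<in>F. if u = w then c w * ?tr w else 0)"
    using others by (intro sum.cong refl) auto
  also have "\<dots> = c w * ?tr w" using fin wF by simp
  also have "?tr w = normN w v"
    using trace_char[of v w T0, where 'a='a] sumG_eq_normN[of w v, where 'a='a] lw unfolding m_def T0_def by simp
  finally have "(\<Sum>u\<in>F. c u * ?tr u) \<noteq> 0" using cw Nwv by simp
  then have "(\<lambda>T. \<Sum>u\<in>F. c u * trace_U m (word_mat m (Xm v) (Ym v) u) T) \<noteq> (\<lambda>_. 0)"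
    by (metis (no_types, lifting))
  moreover have "\<forall>i j. finite {q. (Ym v i j q :: 'a) \<noteq> 0}" using Ym_fin by blast
  ultimately show ?thesis unfolding F_def by blast
qed


end
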